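(* Let $a,b,c,p\in\mathbb{C}$ with $-c\notin\mathbb{N}\cup\{0\}$. Define $(u_n)$ and $(v_n)$ by $u_0=1$, $u_1=\frac{ab}{c}+p$, $u_2=\frac{a(1+a)b(1+b)}{2c(1+c)}+\frac{abp}{c}+\frac{p^2}{2}$, $v_0=1$, $v_1=\frac{ab}{c}-p$, $v_2=\frac{a(1+a)b(1+b)}{2c(1+c)}-\frac{abp}{c}+\frac{p^2}{2}$, and for all integers $n\ge2$, \[ u_{n+1}=\frac{(a+n)(b+n)+p(c+2n)}{(n+1)(c+n)}u_n-\frac{p(a+b+2n+p-1)}{(n+1)(c+n)}u_{n-1}+\frac{p^2}{(n+1)(c+n)}u_{n-2}, \] \[ v_{n+1}=\frac{(a+n)(b+n)-p(c+2n)}{(n+1)(c+n)}v_n+\frac{p(a+b+2n-p-1)}{(n+1)(c+n)}v_{n-1}+\frac{p^2}{(n+1)(c+n)}v_{n-2}. \] Then \[ \cosh(pz)F(a,b;c;z)=\sum_{n=0}^\infty\frac{u_n+v_n}{2}z^n,\qquad |z|<1. \]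
   Context: For $a\in\mathbb{C}$, $(a)_n=a(a+1)\cdots(a+n-1)$ denotes the Pochhammer symbol, with $(a)_0=1$. For $a,b,c\in\mathbb{C}$ with $-c\notin\mathbb{N}\cup\{0\}$, the Gaussian hypergeometric function is $F(a,b;c;z)=\sum_{n=0}^\infty \frac{(a)_n(b)_n}{(c)_n\,n!}z^n$, $|z|<1$. *)

theory Defs
  imports "HOL-Analysis.Analysis"
begin

definition hypergeomF :: "complex \<Rightarrow> complex \<Rightarrow> complex \<Rightarrow> complex \<Rightarrow> complex" where
  "hypergeomF a b c z =
     (\<Sum>n. pochhammer a n * pochhammer b n / (pochhammer c n * fact n) * z ^ n)"

text \<open>The sequence u; the recursion clause for index n+3 is the paper's formula
  for u_{N+1} with N = n+2 (so N \<ge> 2).\<close>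
fun useq :: "complex \<Rightarrow> complex \<Rightarrow> complex \<Rightarrow> complex \<Rightarrow> nat \<Rightarrow> complex" where
  "useq a b c p 0 = 1"
| "useq a b c p (Suc 0) = a * b / c + p"
| "useq a b c p (Suc (Suc 0)) =
     a * (1 + a) * b * (1 + b) / (2 * c * (1 + c)) + a * b * p / c + p ^ 2 / 2"
| "useq a b c p (Suc (Suc (Suc n))) =
     (let N = of_nat (n + 2) :: complex in
       ((a + N) * (b + N) + p * (c + 2 * N)) / ((N + 1) * (c + N)) * useq a b c p (n + 2)
       - p * (a + b + 2 * N + p - 1) / ((N + 1) * (c + N)) * useq a b c p (n + 1)
       + p ^ 2 / ((N + 1) * (c + N)) * useq a b c p n)"

fun vseq :: "complex \<Rightarrow> complex \<Rightarrow> complex \<Rightarrow> complex \<Rightarrow> nat \<Rightarrow> complex" where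
  "vseq a b c p 0 = 1"
| "vseq a b c p (Suc 0) = a * b / c - p"
| "vseq a b c p (Suc (Suc 0)) =
     a * (1 + a) * b * (1 + b) / (2 * c * (1 + c)) - a * b * p / c + p ^ 2 / 2"
| "vseq a b c p (Suc (Suc (Suc n))) =
     (let N = of_nat (n + 2) :: complex in
       ((a + N) * (b + N) - p * (c + 2 * N)) / ((N + 1) * (c + N)) * vseq a b c p (n + 2)
       + p * (a + b + 2 * N - p - 1) / ((N + 1) * (c + N)) * vseq a b c p (n + 1)
       + p ^ 2 / ((N + 1) * (c + N)) * vseq a b c p n)"

end

theory Submission
  imports Defs "HOL-Computational_Algebra.Formal_Power_Series"
begin


definition hf :: "complex \<Rightarrow> complex \<Rightarrow> complex \<Rightarrow> nat \<Rightarrow> complex" where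
  "hf a b c n = pochhammer a n * pochhammer b n / (pochhammer c n * fact n)"

lemma hf_rec:
  assumes "\<forall>n::nat. c \<noteq> - of_nat n"
  shows "(of_nat n + 1) * (c + of_nat n) * hf a b c (Suc n) = (a + of_nat n) * (b + of_nat n) * hf a b c n"
proof -
  have "pochhammer c n \<noteq> 0" using assms by (auto simp: pochhammer_eq_0_iff)
  moreover have "c + of_nat n \<noteq> 0" using assms[rule_format, of n] by (auto simp: add_eq_0_iff)
  moreover have "hf a b c (Suc n) = hf a b c n * ((a + of_nat n) * (b + of_nat n)) / ((of_nat n + 1) * (c + of_nat n))"
  proof -
    have "(1 + of_nat n :: complex) \<noteq> 0" by (metis of_nat_Suc of_nat_neq_0)
    then show ?thesis using \<open>c + of_nat n \<noteq> 0\<close> \<open>pochhammer c n \<noteq> 0\<close>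
      by (simp add: hf_def pochhammer_rec' divide_simps del: of_nat_Suc) (simp add: algebra_simps)
  qed
  moreover have "(of_nat n + 1 :: complex) \<noteq> 0"
    by (metis add.commute of_nat_Suc of_nat_neq_0)
  ultimately show ?thesis by simp
qed

lemma F_ode:
  fixes a b c :: complex
  assumes "\<forall>n::nat. c \<noteq> - of_nat n"
  defines "F \<equiv> Abs_fps (hf a b c)"
  shows "fps_X * fps_deriv (fps_deriv F) - fps_X * (fps_X * fps_deriv (fps_deriv F))
     + fps_const c * fps_deriv F - fps_const (a+b+1) * (fps_X * fps_deriv F) - fps_const (a*b) * F = 0"
proof (rule fps_ext)
  fix n
  have r: "\<And>n. (of_nat n + 1) * (c + of_nat n) * hf a b c (Suc n) = (a + of_nat n) * (b + of_nat n) * hf a b c n"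
    using hf_rec[OF assms(1)] by blast
  show "fps_nth (fps_X * fps_deriv (fps_deriv F) - fps_X * (fps_X * fps_deriv (fps_deriv F))
     + fps_const c * fps_deriv F - fps_const (a+b+1) * (fps_X * fps_deriv F) - fps_const (a*b) * F) n = fps_nth 0 n"
  proof (cases n)
    case 0
    then show ?thesis using r[of 0] by (simp add: F_def)
  next
    case (Suc m)
    note Sm = Suc
    show ?thesis
    proof (cases m)
      case 0
      then show ?thesis using Sm r[of 1] by (simp add: F_def algebra_simps)
    next
      case (Suc k)
      then show ?thesis using Sm r[of "Suc (Suc k)"] by (simp add: F_def algebra_simps)
    qed
  qed
qed
lemma ring_id:
  fixes X E F F1 F2 P C K2 K7 :: "'a::comm_ring_1"
  assumes "X*F2 - X*(X*F2) + C*F1 - K2*(X*F1) - K7*F = 0"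
  shows "X*(P*P*E*F + 2*P*E*F1 + E*F2) - X*(X*(P*P*E*F + 2*P*E*F1 + E*F2)) + C*(P*E*F + E*F1)
     - K2*(X*(P*E*F + E*F1)) - (2*P)*(X*(P*E*F + E*F1)) + (2*P)*(X*(X*(P*E*F + E*F1)))
     + (P*P)*(X*(E*F)) - (P*P)*(X*(X*(E*F))) - (P*C)*(E*F) + (P*K2)*(X*(E*F)) - K7*(E*F) = 0"
proof -
  have "X*(P*P*E*F + 2*P*E*F1 + E*F2) - X*(X*(P*P*E*F + 2*P*E*F1 + E*F2)) + C*(P*E*F + E*F1)
     - K2*(X*(P*E*F + E*F1)) - (2*P)*(X*(P*E*F + E*F1)) + (2*P)*(X*(X*(P*E*F + E*F1)))
     + (P*P)*(X*(E*F)) - (P*P)*(X*(X*(E*F))) - (P*C)*(E*F) + (P*K2)*(X*(E*F)) - K7*(E*F)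
    = E * (X*F2 - X*(X*F2) + C*F1 - K2*(X*F1) - K7*F)"
    by (simp add: algebra_simps)
  with assms show ?thesis by simp
qed

lemma g_coeff:
  fixes a b c p :: complex and n :: nat
  assumes "\<forall>n::nat. c \<noteq> - of_nat n"
  defines "g \<equiv> fps_nth (fps_exp p * Abs_fps (hf a b c))"
  defines "N \<equiv> (of_nat (n + 2) :: complex)"
  shows "(N + 1) * (c + N) * g (Suc (Suc (Suc n))) =
     ((a + N) * (b + N) + p * (c + 2 * N)) * g (n + 2) - p * (a + b + 2 * N + p - 1) * g (n + 1) + p ^ 2 * g n"
proof -
  define F where "F = Abs_fps (hf a b c)"
  define E where "E = fps_exp p"
  define G where "G = E * F"
  define P where "P = (fps_const p :: complex fps)"
  have dE: "fps_deriv E = P * E" by (simp add: E_def P_def)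
  have dP: "fps_deriv P = 0" by (simp add: P_def)
  have d1: "fps_deriv G = P * E * F + E * fps_deriv F"
    unfolding G_def fps_deriv_mult dE by (simp only: mult_ac add_ac distrib_left distrib_right)
  have d2: "fps_deriv (fps_deriv G) = P * P * E * F + 2 * P * E * fps_deriv F + E * fps_deriv (fps_deriv F)"
    unfolding d1 fps_deriv_add fps_deriv_mult dE dP by (simp only: mult_ac add_ac distrib_left distrib_right mult_2 mult_2_right mult_zero_right mult_zero_left add_0_left add_0_right)
  have o: "fps_X * fps_deriv (fps_deriv F) - fps_X * (fps_X * fps_deriv (fps_deriv F))
     + fps_const c * fps_deriv F - fps_const (a+b+1) * (fps_X * fps_deriv F) - fps_const (a*b) * F = 0"
    using F_ode[OF assms(1), of a b] unfolding F_def .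
  have k1: "2 * P = fps_const (2 * p)" by (simp add: P_def numeral_fps_const)
  have k2: "P * P = fps_const (p * p)" by (simp add: P_def)
  have k3: "P * fps_const c = fps_const (p * c)" by (simp add: P_def)
  have k4: "P * fps_const (a+b+1) = fps_const (p * (a+b+1))" by (simp add: P_def)
  have "fps_X * fps_deriv (fps_deriv G) - fps_X * (fps_X * fps_deriv (fps_deriv G))
     + fps_const c * fps_deriv G - fps_const (a + b + 1) * (fps_X * fps_deriv G)
     - fps_const (2 * p) * (fps_X * fps_deriv G) + fps_const (2 * p) * (fps_X * (fps_X * fps_deriv G))
     + fps_const (p * p) * (fps_X * G) - fps_const (p * p) * (fps_X * (fps_X * G)) - fps_const (p * c) * G + fps_const (p * (a + b + 1)) * (fps_X * G)
     - fps_const (a * b) * G = 0"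
    unfolding d2 unfolding d1 using ring_id[OF o, of P E] unfolding G_def k1 k2 k3 k4 .
  then have "fps_nth (fps_X * fps_deriv (fps_deriv G) - fps_X * (fps_X * fps_deriv (fps_deriv G))
     + fps_const c * fps_deriv G - fps_const (a + b + 1) * (fps_X * fps_deriv G)
     - fps_const (2 * p) * (fps_X * fps_deriv G) + fps_const (2 * p) * (fps_X * (fps_X * fps_deriv G))
     + fps_const (p * p) * (fps_X * G) - fps_const (p * p) * (fps_X * (fps_X * G)) - fps_const (p * c) * G + fps_const (p * (a + b + 1)) * (fps_X * G)
     - fps_const (a * b) * G) (Suc (Suc n)) = 0" by simp
  then have e: "(of_nat (Suc (Suc n)) * of_nat (Suc (Suc (Suc n)))) * g (Suc (Suc (Suc n))) - (of_nat (Suc n) * of_nat (Suc (Suc n))) * g (Suc (Suc n))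
     + c * (of_nat (Suc (Suc (Suc n))) * g (Suc (Suc (Suc n)))) - (a + b + 1) * (of_nat (Suc (Suc n)) * g (Suc (Suc n)))
     - (2 * p) * (of_nat (Suc (Suc n)) * g (Suc (Suc n))) + (2 * p) * (of_nat (Suc n) * g (Suc n))
     + (p * p) * g (Suc n) - (p * p) * g n - (p * c) * g (Suc (Suc n)) + (p * (a + b + 1)) * g (Suc n)
     - (a * b) * g (Suc (Suc n)) = 0"
    unfolding g_def G_def[unfolded E_def F_def, symmetric] G_def[symmetric] E_def[symmetric] F_def[symmetric]
    by (simp add: mult.assoc del: of_nat_Suc)
  have "(N + 1) * (c + N) * g (Suc (Suc (Suc n))) -
     (((a + N) * (b + N) + p * (c + 2 * N)) * g (n + 2) - p * (a + b + 2 * N + p - 1) * g (n + 1) + p ^ 2 * g n)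
     = (of_nat (Suc (Suc n)) * of_nat (Suc (Suc (Suc n)))) * g (Suc (Suc (Suc n))) - (of_nat (Suc n) * of_nat (Suc (Suc n))) * g (Suc (Suc n))
     + c * (of_nat (Suc (Suc (Suc n))) * g (Suc (Suc (Suc n)))) - (a + b + 1) * (of_nat (Suc (Suc n)) * g (Suc (Suc n)))
     - (2 * p) * (of_nat (Suc (Suc n)) * g (Suc (Suc n))) + (2 * p) * (of_nat (Suc n) * g (Suc n))
     + (p * p) * g (Suc n) - (p * p) * g n - (p * c) * g (Suc (Suc n)) + (p * (a + b + 1)) * g (Suc n)
     - (a * b) * g (Suc (Suc n))"
    unfolding N_def by (simp add: algebra_simps power2_eq_square)
  with e show ?thesis by simp
qed



lemma hf_Suc:
  fixes a b c :: complex
  assumes "\<forall>n::nat. c \<noteq> - of_nat n"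
  shows "hf a b c (Suc n) = hf a b c n * ((a + of_nat n) * (b + of_nat n)) / ((of_nat n + 1) * (c + of_nat n))"
proof -
  have "(of_nat n + 1 :: complex) \<noteq> 0" by (metis add.commute of_nat_Suc of_nat_neq_0)
  moreover have "c + of_nat n \<noteq> 0" using assms[rule_format, of n] by (auto simp: add_eq_0_iff)
  ultimately have d: "(of_nat n + 1) * (c + of_nat n) \<noteq> 0" by simp
  show ?thesis using d hf_rec[OF assms, of n a b] by (simp add: eq_divide_eq mult_ac)
qed

lemma solve_rec:
  fixes D A B C g0 g1 g2 g3 :: complex
  assumes "D \<noteq> 0" "D * g3 = A * g2 - B * g1 + C * g0"
  shows "A / D * g2 - B / D * g1 + C / D * g0 = g3"
  using assms by (simp add: field_simps)

lemma u_eq: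
  fixes a b c p :: complex
  assumes h: "\<forall>n::nat. c \<noteq> - of_nat n"
  shows "useq a b c p n = fps_nth (fps_exp p * Abs_fps (hf a b c)) n"
proof (induction n rule: less_induct)
  case (less n)
  have c0: "c \<noteq> 0" using h[rule_format, of 0] by simp
  have c1: "1 + c \<noteq> 0" using h[rule_format, of 1] by (auto simp: add_eq_0_iff)
  consider "n = 0" | "n = 1" | "n = 2" | m where "n = Suc (Suc (Suc m))"
    by (metis One_nat_def Suc_1 nat.exhaust)
  then show ?case
  proof cases
    case 1 then show ?thesis by (simp add: hf_def)
  next
    case 2 then show ?thesis using c0 by (simp add: hf_def fps_mult_nth)
  next
    case 3 then show ?thesis using c0 c1
      by (simp add: hf_def fps_mult_nth numeral_2_eq_2 pochhammer_Suc field_simps)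
  next
    case 4
    define N where "N = (of_nat (m + 2) :: complex)"
    have N1: "N + 1 \<noteq> 0" unfolding N_def by (metis add.commute of_nat_Suc of_nat_neq_0)
    have cN: "c + N \<noteq> 0" using h[rule_format, of "m+2"] unfolding N_def eq_neg_iff_add_eq_0 .
    have IH: "useq a b c p (m + 2) = fps_nth (fps_exp p * Abs_fps (hf a b c)) (m + 2)"
      "useq a b c p (m + 1) = fps_nth (fps_exp p * Abs_fps (hf a b c)) (m + 1)"
      "useq a b c p m = fps_nth (fps_exp p * Abs_fps (hf a b c)) m"
      using less 4 by auto
    have rec: "useq a b c p (Suc (Suc (Suc m))) =
       ((a + N) * (b + N) + p * (c + 2 * N)) / ((N + 1) * (c + N)) * useq a b c p (m + 2)
       - p * (a + b + 2 * N + p - 1) / ((N + 1) * (c + N)) * useq a b c p (m + 1)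
       + p ^ 2 / ((N + 1) * (c + N)) * useq a b c p m"
      by (simp add: N_def Let_def)
    have D: "(N + 1) * (c + N) \<noteq> 0" using N1 cN by simp
    show ?thesis unfolding 4 rec IH
      by (rule solve_rec[OF D]) (use g_coeff[OF h, where p=p and a=a and b=b and n=m] in \<open>simp add: N_def\<close>)
  qed
qed

lemma v_u: "vseq a b c p n = useq a b c (-p) n"
  by (induction a b c p n rule: vseq.induct) (simp_all add: Let_def)

lemma lim_ratio:
  fixes x y :: complex
  shows "(\<lambda>n. (x + of_nat n) / (y + of_nat n)) \<longlonglongrightarrow> 1"
proof -
  have 1: "(\<lambda>n. (1 + x * inverse (of_nat n)) / (1 + y * inverse (of_nat n))) \<longlonglongrightarrow> (1 + x*0)/(1+y*0)"
    by (intro tendsto_intros lim_inverse_n) simp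
  have 2: "eventually (\<lambda>n. (1 + x * inverse (of_nat n)) / (1 + y * inverse (of_nat n)) = (x + of_nat n) / (y + of_nat n)) sequentially"
    using eventually_gt_at_top[of 0]
  proof eventually_elim
    case (elim n)
    then have "(of_nat n :: complex) \<noteq> 0" by simp
    then have "1 + x * inverse (of_nat n) = (x + of_nat n) / of_nat n" "1 + y * inverse (of_nat n) = (y + of_nat n) / of_nat n"
      by (simp_all add: field_simps)
    then show ?case using \<open>(of_nat n :: complex) \<noteq> 0\<close> by simp
  qed
  show ?thesis using Lim_transform_eventually[OF 1 2] by simp
qed



lemma hf_summable:
  fixes a b c z :: complex
  assumes h: "\<forall>n::nat. c \<noteq> - of_nat n" and z: "norm z < 1"
  shows "summable (\<lambda>n. norm (hf a b c n * z ^ n))"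
proof -
  define K where "K = (1 + norm z) / 2"
  have K1: "K < 1" and zK: "norm z < K" using z by (auto simp: K_def)
  define r where "r n = (a + of_nat n) / (1 + of_nat n) * ((b + of_nat n) / (c + of_nat n))" for n
  have "r \<longlonglongrightarrow> 1 * 1" unfolding r_def by (intro tendsto_mult lim_ratio)
  then have "(\<lambda>n. norm (r n) * norm z) \<longlonglongrightarrow> norm (1::complex) * norm z"
    by (intro tendsto_mult tendsto_norm tendsto_const) simp
  then have "eventually (\<lambda>n. norm (r n) * norm z < K) sequentially"
    using zK by (intro order_tendstoD(2)) auto
  then obtain N where N: "\<And>n. n \<ge> N \<Longrightarrow> norm (r n) * norm z < K"
    by (auto simp: eventually_sequentially)
  have hS: "hf a b c (Suc n) = hf a b c n * r n" for n
    unfolding hf_Suc[OF h] r_def by (simp add: add.commute mult.assoc)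
  show ?thesis
  proof (rule summable_ratio_test[OF K1, of N])
    fix n assume "n \<ge> N"
    have "norm (norm (hf a b c (Suc n) * z ^ Suc n)) = (norm (r n) * norm z) * norm (hf a b c n * z ^ n)"
      by (simp add: hS norm_mult norm_power mult_ac)
    also have "\<dots> \<le> K * norm (norm (hf a b c n * z ^ n))"
      using N[OF \<open>n \<ge> N\<close>] by (simp add: mult_right_mono)
    finally show "norm (norm (hf a b c (Suc n) * z ^ Suc n)) \<le> K * norm (norm (hf a b c n * z ^ n))" .
  qed
qed

lemma u_sums:
  fixes a b c q z :: complex
  assumes h: "\<forall>n::nat. c \<noteq> - of_nat n" and z: "norm z < 1"
  shows "(\<lambda>n. useq a b c q n * z ^ n) sums (exp (q * z) * hypergeomF a b c z)"
proof -
  have hs: "summable (\<lambda>n. norm (hf a b c n * z ^ n))" by (rule hf_summable[OF h z])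
  have Fv: "(\<Sum>n. hf a b c n * z ^ n) = hypergeomF a b c z" by (simp add: hypergeomF_def hf_def)
  have Ev: "(\<Sum>n. (q * z) ^ n /\<^sub>R fact n) = exp (q * z)" using exp_converges sums_unique by metis
  have C: "(\<lambda>k. \<Sum>i\<le>k. ((q * z) ^ i /\<^sub>R fact i) * (hf a b c (k - i) * z ^ (k - i))) sums (exp (q * z) * hypergeomF a b c z)"
    using Cauchy_product_sums[OF summable_norm_exp[of "q * z"] hs] unfolding Fv Ev .
  have "(\<Sum>i\<le>k. ((q * z) ^ i /\<^sub>R fact i) * (hf a b c (k - i) * z ^ (k - i))) = useq a b c q k * z ^ k" for k
  proof -
    have t: "((q * z) ^ i /\<^sub>R fact i) * (hf a b c (k - i) * z ^ (k - i)) = q ^ i / fact i * hf a b c (k - i) * z ^ k"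
      if "i \<in> {..k}" for i
    proof -
      have "z ^ k = z ^ i * z ^ (k - i)" using that by (simp add: power_add[symmetric])
      then show ?thesis by (simp add: scaleR_conv_of_real power_mult_distrib field_simps)
    qed
    have u: "useq a b c q k = (\<Sum>i\<le>k. q ^ i / fact i * hf a b c (k - i))"
      by (simp add: u_eq[OF h] fps_mult_nth atLeast0AtMost)
    have "(\<Sum>i\<le>k. ((q * z) ^ i /\<^sub>R fact i) * (hf a b c (k - i) * z ^ (k - i)))
       = (\<Sum>i\<le>k. q ^ i / fact i * hf a b c (k - i) * z ^ k)"
      by (rule sum.cong[OF refl]) (rule t)
    also have "\<dots> = (\<Sum>i\<le>k. q ^ i / fact i * hf a b c (k - i)) * z ^ k"
      by (rule sum_distrib_right[symmetric])
    finally show ?thesis unfolding u .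
  qed
  then show ?thesis using C by simp
qed

theorem theorem3p3:
  fixes a b c p z :: complex
  assumes "\<forall>n::nat. c \<noteq> - of_nat n"
    and "norm z < 1"
  shows "(\<lambda>n. (useq a b c p n + vseq a b c p n) / 2 * z ^ n)
           sums (cosh (p * z) * hypergeomF a b c z)"
proof -
  have "(\<lambda>n. (useq a b c p n * z ^ n + useq a b c (-p) n * z ^ n) / 2) sums
    ((exp (p * z) * hypergeomF a b c z + exp ((-p) * z) * hypergeomF a b c z) / 2)"
    by (intro sums_divide sums_add u_sums assms)
  moreover have "(exp (p * z) * hypergeomF a b c z + exp ((-p) * z) * hypergeomF a b c z) / 2
      = cosh (p * z) * hypergeomF a b c z"
    by (simp add: cosh_def scaleR_conv_of_real field_simps)
  ultimately show ?thesis by (simp add: v_u field_simps)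
qed

end
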